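(* Assume $K$ has nonempty interior and let $d$ be the maximum degree of $f_1,\ldots,f_m$. Define $$\mathcal V=\{v=(v_1,\ldots,v_m)\in\mathbb R^m:\ \exists\, y\in\mathscr R_d(K)\text{ with } y_0=1 \text{ and } v_i>\langle f_i,y\rangle \ (i=1,\ldots,m)\}.$$ Then the interior of $\mathrm{conv}(\mathcal U)$ equals $\mathcal V$. Moreover, if $\mathcal U$ is convex, then a vector $v\in f(K)$ is a weakly Pareto value if and only if $v$ belongs to the boundary of the closure of $\mathcal V$.
   Context: Let $f_1,\ldots,f_m,c_i$ ($i\in\mathcal E\cup\mathcal I$) be real polynomials in $x\in\mathbb R^n$, $\mathcal E,\mathcal I$ disjoint finite index sets, and $K=\{x: c_i(x)=0\ (i\in\mathcal E),\ c_j(x)\ge0\ (j\in\mathcal I)\}$; $f=(f_1,\ldots,f_m)$, $\mathcal U=f(K)+\mathbb R^m_+=\{u: u_i\ge f_i(x)\ \forall i \text{ for some } x\in K\}$. A point $x^*\in K$ is weakly Pareto if no $x\in K$ has $f_i(x)<f_i(x^* )$ for all $i$; $v$ is a weakly Pareto value if $v=f(x^* )$ for a weakly Pareto point $x^*$. For $d\in\mathbb N$, $\mathbb N^n_d=\{\alpha\in\mathbb N^n:|\alpha|\le d\}$; a vector $y=(y_\alpha)_{\alpha\in\mathbb N^n_d}$ is a truncated multi-sequence, and for $p=\sum_\alpha p_\alpha x^\alpha$ of degree $\le d$, $\langle p,y\rangle=\sum_\alpha p_\alpha y_\alpha$; $y_0$ denotes the entry with $\alpha=0$. The moment cone is $\mathscr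 R_d(K)=\{y\in\mathbb R^{\mathbb N^n_d}: \exists$ a Borel measure $\mu$ with support in $K$ and $y_\alpha=\int x^\alpha d\mu$ for all $\alpha\in\mathbb N^n_d\}$. *)

theory Defs
  imports "HOL-Analysis.Analysis" "HOL-Probability.Probability"
begin

text \<open>Multivariate real polynomials in x in R^n (n = CARD('n)) are represented by their
coefficient functions on exponent vectors alpha :: 'n => nat, with finite support.\<close>

definition mdeg :: "('n::finite \<Rightarrow> nat) \<Rightarrow> nat" where
  "mdeg \<alpha> = (\<Sum>i\<in>UNIV. \<alpha> i)"

definition mono_set :: "nat \<Rightarrow> ('n::finite \<Rightarrow> nat) set" where
  "mono_set d = {\<alpha>. mdeg \<alpha> \<le> d}"

definition monom :: "('n::finite \<Rightarrow> nat) \<Rightarrow> real^'n \<Rightarrow> real" where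
  "monom \<alpha> x = (\<Prod>i\<in>UNIV. (x $ i) ^ (\<alpha> i))"

definition is_poly :: "(('n::finite \<Rightarrow> nat) \<Rightarrow> real) \<Rightarrow> bool" where
  "is_poly p \<longleftrightarrow> finite {\<alpha>. p \<alpha> \<noteq> 0}"

definition peval :: "(('n::finite \<Rightarrow> nat) \<Rightarrow> real) \<Rightarrow> real^'n \<Rightarrow> real" where
  "peval p x = (\<Sum>\<alpha>\<in>{\<alpha>. p \<alpha> \<noteq> 0}. p \<alpha> * monom \<alpha> x)"

definition pdeg :: "(('n::finite \<Rightarrow> nat) \<Rightarrow> real) \<Rightarrow> nat" where
  "pdeg p = Max (insert 0 (mdeg ` {\<alpha>. p \<alpha> \<noteq> 0}))"

definition mpair :: "nat \<Rightarrow> (('n::finite \<Rightarrow> nat) \<Rightarrow> real) \<Rightarrow> (('n \<Rightarrow> nat) \<Rightarrow> real) \<Rightarrow> real" where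
  "mpair d p y = (\<Sum>\<alpha>\<in>mono_set d. p \<alpha> * y \<alpha>)"

definition moment_cone :: "nat \<Rightarrow> (real^'n::finite) set \<Rightarrow> (('n \<Rightarrow> nat) \<Rightarrow> real) set" where
  "moment_cone d K = {y. (\<forall>\<alpha>. \<alpha> \<notin> mono_set d \<longrightarrow> y \<alpha> = 0) \<and>
     (\<exists>\<mu> :: (real^'n) measure. sets \<mu> = sets borel \<and> emeasure \<mu> (UNIV - K) = 0 \<and>
        (\<forall>\<alpha>\<in>mono_set d. integrable \<mu> (monom \<alpha>) \<and> y \<alpha> = integral\<^sup>L \<mu> (monom \<alpha>)))}"

definition weakly_pareto :: "(real^'n) set \<Rightarrow> ('m \<Rightarrow> real^'n \<Rightarrow> real) \<Rightarrow> real^'n \<Rightarrow> bool" where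
  "weakly_pareto K F x \<longleftrightarrow> x \<in> K \<and> \<not> (\<exists>z\<in>K. \<forall>i. F i z < F i x)"

definition weakly_pareto_value :: "(real^'n) set \<Rightarrow> ('m::finite \<Rightarrow> real^'n \<Rightarrow> real) \<Rightarrow> real^'m \<Rightarrow> bool" where
  "weakly_pareto_value K F v \<longleftrightarrow> (\<exists>x. weakly_pareto K F x \<and> v = (\<chi> i. F i x))"

end

theory Submission
  imports Defs
begin

lemma finite_mono_set: "finite (mono_set d :: ('n::finite \<Rightarrow> nat) set)"
proof -
  have "mono_set d \<subseteq> (\<Pi>\<^sub>E i \<in> (UNIV::'n set). {..d})"
  proof
    fix \<alpha> :: "'n \<Rightarrow> nat" assume "\<alpha> \<in> mono_set d"
    hence "(\<Sum>i\<in>UNIV. \<alpha> i) \<le> d" by (simp add: mono_set_def mdeg_def)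
    moreover have "\<alpha> i \<le> (\<Sum>i\<in>UNIV. \<alpha> i)" for i
      by (rule member_le_sum) auto
    ultimately show "\<alpha> \<in> (\<Pi>\<^sub>E i \<in> (UNIV::'n set). {..d})" by (auto intro: order_trans)
  qed
  moreover have "finite (\<Pi>\<^sub>E i \<in> (UNIV::'n set). {..d})" by (rule finite_PiE) auto
  ultimately show ?thesis by (rule finite_subset)
qed

lemma supp_sub: assumes "is_poly p" "pdeg p \<le> d" shows "{\<alpha>. p \<alpha> \<noteq> 0} \<subseteq> mono_set d"
proof
  fix \<alpha> assume a: "\<alpha> \<in> {\<alpha>. p \<alpha> \<noteq> 0}"
  have "mdeg \<alpha> \<le> pdeg p" unfolding pdeg_def
    using assms(1) a by (intro Max_ge) (auto simp: is_poly_def)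
  with assms(2) show "\<alpha> \<in> mono_set d" by (simp add: mono_set_def)
qed

lemma cont_monom: "continuous_on UNIV (monom \<alpha>)"
  unfolding monom_def by (intro continuous_intros)

lemma cont_peval: "continuous_on UNIV (peval p)"
  unfolding peval_def using cont_monom by (intro continuous_intros) auto

lemma mpair_integral:
  fixes \<mu> :: "(real^'n::finite) measure"
  assumes "is_poly p" "pdeg p \<le> d"
    and "\<forall>\<alpha>\<in>mono_set d. integrable \<mu> (monom \<alpha>) \<and> y \<alpha> = integral\<^sup>L \<mu> (monom \<alpha>)"
  shows "integrable \<mu> (peval p) \<and> mpair d p y = integral\<^sup>L \<mu> (peval p)"
proof -
  let ?S = "{\<alpha>. p \<alpha> \<noteq> 0}"
  have sub: "?S \<subseteq> mono_set d" by (rule supp_sub[OF assms(1,2)])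
  have int: "integrable \<mu> (\<lambda>x. p \<alpha> * monom \<alpha> x)" if "\<alpha> \<in> ?S" for \<alpha>
    using assms(3) sub that by auto
  have pe: "peval p = (\<lambda>x. \<Sum>\<alpha>\<in>?S. p \<alpha> * monom \<alpha> x)" by (simp add: peval_def fun_eq_iff)
  have "mpair d p y = (\<Sum>\<alpha>\<in>mono_set d. p \<alpha> * y \<alpha>)" by (simp add: mpair_def)
  also have "\<dots> = (\<Sum>\<alpha>\<in>?S. p \<alpha> * y \<alpha>)"
    by (rule sum.mono_neutral_right[OF finite_mono_set sub]) auto
  also have "\<dots> = (\<Sum>\<alpha>\<in>?S. integral\<^sup>L \<mu> (\<lambda>x. p \<alpha> * monom \<alpha> x))"
    using assms(3) sub by (intro sum.cong) auto
  also have "\<dots> = integral\<^sup>L \<mu> (peval p)"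
    unfolding pe by (rule Bochner_Integration.integral_sum[symmetric]) (rule int)
  finally show ?thesis using int unfolding pe by auto
qed


lemma vec_sum_nth: "(\<Sum>s\<in>S. (w s :: real) *\<^sub>R (s :: real^'m::finite)) $ i = (\<Sum>s\<in>S. w s * s $ i)"
  by (induct S rule: infinite_finite_induct) simp_all

lemma upclosed_interior:
  fixes S :: "(real^'m::finite) set"
  assumes up: "\<And>a b. a \<in> S \<Longrightarrow> (\<forall>i. a$i \<le> b$i) \<Longrightarrow> b \<in> S"
    and "u \<in> S" and lt: "\<forall>i. u$i < w$i"
  shows "w \<in> interior S"
proof -
  define \<delta> where "\<delta> = Min (range (\<lambda>i. w$i - u$i))"
  have "\<delta> \<in> range (\<lambda>i. w$i - u$i)" unfolding \<delta>_def by (intro Min_in) auto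
  hence "\<delta> > 0" using lt by auto
  have dl: "\<delta> \<le> w$i - u$i" for i unfolding \<delta>_def by (intro Min_le) auto
  have "ball w \<delta> \<subseteq> S"
  proof
    fix b assume "b \<in> ball w \<delta>"
    hence "norm (w - b) < \<delta>" by (simp add: dist_norm)
    hence "\<bar>(w - b)$i\<bar> < \<delta>" for i using component_le_norm_cart[of "w-b" i] by linarith
    hence h: "\<bar>(w - b)$i\<bar> < \<delta>" for i .
    have "u$i \<le> b$i" for i using h[of i] dl[of i] by (auto simp: abs_less_iff)
    thus "b \<in> S" using up[OF \<open>u \<in> S\<close>] by auto
  qed
  thus ?thesis using \<open>\<delta> > 0\<close> by (auto simp: mem_interior)
qed

lemma interior_below:
  fixes S :: "(real^'m::finite) set"
  assumes "w \<in> interior S"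
  shows "\<exists>u\<in>S. \<forall>i. u$i < w$i"
proof -
  obtain e where e: "e > 0" "ball w e \<subseteq> S" using assms by (auto simp: mem_interior)
  define \<delta> where "\<delta> = e / (2 * real CARD('m))"
  have c: "real CARD('m) > 0" by simp
  have "\<delta> > 0" using e c by (simp add: \<delta>_def)
  define u where "u = w - (\<chi> i. \<delta>)"
  have "norm (w - u) \<le> (\<Sum>i\<in>UNIV. \<bar>(w - u)$i\<bar>)" by (rule norm_le_l1_cart)
  also have "\<dots> = real CARD('m) * \<delta>" using \<open>\<delta> > 0\<close> by (simp add: u_def)
  also have "\<dots> = e / 2" using c by (simp add: \<delta>_def)
  finally have "u \<in> ball w e" using e by (simp add: dist_norm)
  with e have "u \<in> S" by auto
  moreover have "\<forall>i. u$i < w$i" using \<open>\<delta> > 0\<close> by (simp add: u_def)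
  ultimately show ?thesis by blast
qed

lemma hull_upclosed:
  fixes U :: "(real^'m::finite) set"
  assumes up: "\<And>a b. a \<in> U \<Longrightarrow> (\<forall>i. a$i \<le> b$i) \<Longrightarrow> b \<in> U"
    and a: "a \<in> convex hull U" and ab: "\<forall>i. a$i \<le> b$i"
  shows "b \<in> convex hull U"
proof -
  have "(\<lambda>x. (b - a) + x) ` U \<subseteq> U"
  proof
    fix z assume "z \<in> (\<lambda>x. (b - a) + x) ` U"
    then obtain x where x: "x \<in> U" "z = (b - a) + x" by blast
    have "\<forall>i. x$i \<le> z$i" using ab x(2) by simp
    thus "z \<in> U" by (rule up[OF x(1)])
  qed
  hence "convex hull ((\<lambda>x. (b - a) + x) ` U) \<subseteq> convex hull U" by (rule hull_mono)
  moreover have "b \<in> convex hull ((\<lambda>x. (b - a) + x) ` U)"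
    unfolding convex_hull_translation using a by (intro image_eqI[of _ _ a]) auto
  ultimately show ?thesis by auto
qed

lemma moment_props:
  fixes K :: "(real^'n::finite) set"
  assumes "y \<in> moment_cone d K" "y (\<lambda>_. 0) = 1" "closed K"
  obtains \<mu> where "prob_space \<mu>" "sets \<mu> = sets borel" "AE x in \<mu>. x \<in> K"
    "\<forall>\<alpha>\<in>mono_set d. integrable \<mu> (monom \<alpha>) \<and> y \<alpha> = integral\<^sup>L \<mu> (monom \<alpha>)"
proof -
  obtain \<mu> :: "(real^'n) measure" where s: "sets \<mu> = sets borel" and z: "emeasure \<mu> (UNIV - K) = 0"
    and m: "\<forall>\<alpha>\<in>mono_set d. integrable \<mu> (monom \<alpha>) \<and> y \<alpha> = integral\<^sup>L \<mu> (monom \<alpha>)"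
    using assms(1) unfolding moment_cone_def by auto
  have "(\<lambda>_. 0) \<in> (mono_set d :: ('n \<Rightarrow> nat) set)" by (simp add: mono_set_def mdeg_def)
  moreover have "monom (\<lambda>_. 0) = (\<lambda>_::real^'n. 1::real)" by (simp add: monom_def fun_eq_iff)
  ultimately have i1: "integrable \<mu> (\<lambda>_. 1::real)" and e1: "1 = integral\<^sup>L \<mu> (\<lambda>_. 1::real)"
    using m assms(2) by auto
  have fin: "emeasure \<mu> (space \<mu>) < \<infinity>" using i1 by (simp add: integrable_iff_bounded)
  then interpret finite_measure \<mu> by (intro finite_measureI) auto
  have "measure \<mu> (space \<mu>) = 1" using e1 by simp
  hence "emeasure \<mu> (space \<mu>) = 1" by (simp add: emeasure_eq_measure)
  hence p: "prob_space \<mu>" by (intro prob_spaceI)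
  have sp: "space \<mu> = UNIV" using sets_eq_imp_space_eq[OF s] by simp
  have "UNIV - K \<in> sets \<mu>" unfolding s using assms(3) by (intro borel_open) (auto simp: open_Diff)
  hence "UNIV - K \<in> null_sets \<mu>" using z by auto
  hence ae: "AE x in \<mu>. x \<in> K" by (rule AE_I') (auto simp: sp)
  show ?thesis by (rule that[OF p s ae m])
qed

lemma filter_distinct_eq: "distinct xs \<Longrightarrow> x \<in> set xs \<Longrightarrow> filter (\<lambda>y. y = x) xs = [x]"
  by (induct xs) (auto simp: filter_empty_conv)

lemma mean_in_closure:
  fixes \<mu> :: "(real^'n::finite) measure" and F :: "'m::finite \<Rightarrow> real^'n \<Rightarrow> real"
  assumes "prob_space \<mu>" "AE x in \<mu>. x \<in> K" "\<forall>i. integrable \<mu> (F i)"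
    "\<forall>x\<in>K. (\<chi> i. F i x) \<in> U"
  shows "(\<chi> i. integral\<^sup>L \<mu> (F i)) \<in> closure (convex hull U)"
proof (rule ccontr)
  interpret prob_space \<mu> by fact
  let ?w = "(\<chi> i. integral\<^sup>L \<mu> (F i))"
  assume "?w \<notin> closure (convex hull U)"
  then obtain a b where ab: "inner a ?w < b" "\<forall>x\<in>closure (convex hull U). b < inner a x"
    using separating_hyperplane_closed_point[of "closure (convex hull U)" ?w,
       OF convex_closure[OF convex_convex_hull] closed_closure] by blast
  have "\<forall>x\<in>K. b < (\<Sum>i\<in>UNIV. a$i * F i x)"
  proof
    fix x assume "x \<in> K"
    hence "(\<chi> i. F i x) \<in> U" using assms(4) by blast
    hence "(\<chi> i. F i x) \<in> convex hull U" by (rule hull_inc)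
    hence "(\<chi> i. F i x) \<in> closure (convex hull U)" by (rule closure_subset[THEN subsetD])
    hence "b < inner a (\<chi> i. F i x)" by (rule ab(2)[rule_format])
    thus "b < (\<Sum>i\<in>UNIV. a$i * F i x)" by (simp add: inner_vec_def)
  qed
  hence "AE x in \<mu>. b \<le> (\<Sum>i\<in>UNIV. a$i * F i x)" using assms(2)
    by (rule_tac AE_mp[OF assms(2)]) (auto intro!: AE_I2 less_imp_le)
  hence "b \<le> integral\<^sup>L \<mu> (\<lambda>x. \<Sum>i\<in>UNIV. a$i * F i x)"
    using assms(3) by (intro integral_ge_const) auto
  also have "\<dots> = (\<Sum>i\<in>UNIV. a$i * integral\<^sup>L \<mu> (F i))"
    using assms(3) by (simp add: Bochner_Integration.integral_sum)
  also have "\<dots> = inner a ?w" by (simp add: inner_vec_def)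
  finally show False using ab(1) by simp
qed


lemma conv_to_moment:
  fixes K :: "(real^'n::finite) set" and U :: "(real^'m::finite) set"
    and f :: "'m \<Rightarrow> ('n \<Rightarrow> nat) \<Rightarrow> real"
  assumes "closed K" "\<forall>i. is_poly (f i)" "\<forall>i. pdeg (f i) \<le> d"
    "\<forall>s\<in>U. \<exists>x\<in>K. \<forall>i. peval (f i) x \<le> s$i" "u \<in> convex hull U"
  shows "\<exists>y\<in>moment_cone d K. y (\<lambda>_. 0) = 1 \<and> (\<forall>i. mpair d (f i) y \<le> u$i)"
proof -
  obtain S w where S: "finite S" "S \<subseteq> U" "\<forall>x\<in>S. 0 \<le> w x" "sum w S = 1"
      "(\<Sum>v\<in>S. w v *\<^sub>R v) = u"
    using assms(5) unfolding convex_hull_explicit by blast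
  obtain g where g: "\<forall>s\<in>U. g s \<in> K \<and> (\<forall>i. peval (f i) (g s) \<le> s$i)"
  proof -
    have "\<forall>s\<in>U. \<exists>x. x \<in> K \<and> (\<forall>i. peval (f i) x \<le> s$i)" using assms(4) by blast
    from bchoice[OF this] show ?thesis using that by blast
  qed
  obtain xs where xs: "set xs = S" "distinct xs" using finite_distinct_list[OF S(1)] by blast
  define ys where "ys = map (\<lambda>s. (s, w s)) xs"
  have "sum_list (map snd ys) = sum w S"
    unfolding ys_def using xs by (simp add: o_def sum_list_distinct_conv_sum_set)
  hence wf: "pmf_of_list_wf ys"
    unfolding pmf_of_list_wf_def using S xs by (auto simp: ys_def)
  define p where "p = pmf_of_list ys"
  have pp: "pmf p s = w s" if "s \<in> S" for s
  proof -
    have "filter (\<lambda>z. fst z = s) ys = map (\<lambda>s. (s, w s)) (filter (\<lambda>x. x = s) xs)"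
      unfolding ys_def by (simp add: filter_map o_def)
    also have "\<dots> = [(s, w s)]" using filter_distinct_eq[OF xs(2)] xs(1) that by simp
    finally show ?thesis unfolding p_def pmf_pmf_of_list[OF wf] by simp
  qed
  have sp: "set_pmf p \<subseteq> S" using set_pmf_of_list[OF wf] xs unfolding p_def ys_def by auto
  have finp: "finite (set_pmf p)" using sp S(1) by (rule finite_subset)
  have intp: "integral\<^sup>L (measure_pmf p) h = (\<Sum>s\<in>S. w s * h s)" for h :: "real^'m \<Rightarrow> real"
  proof -
    have "integral\<^sup>L (measure_pmf p) h = (\<Sum>s\<in>S. pmf p s *\<^sub>R h s)"
      by (rule integral_measure_pmf[OF S(1)]) (use sp in auto)
    also have "\<dots> = (\<Sum>s\<in>S. w s * h s)" using pp by (intro sum.cong) auto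
    finally show ?thesis .
  qed
  define \<mu> where "\<mu> = distr (measure_pmf p) borel g"
  have meas: "g \<in> measurable (measure_pmf p) borel" by simp
  have sets: "sets \<mu> = sets borel" by (simp add: \<mu>_def)
  have int: "integrable \<mu> h \<and> integral\<^sup>L \<mu> h = (\<Sum>s\<in>S. w s * h (g s))"
    if "continuous_on UNIV h" for h :: "real^'n \<Rightarrow> real"
  proof -
    have hm: "h \<in> borel_measurable borel" by (rule borel_measurable_continuous_onI[OF that])
    have "integrable \<mu> h" unfolding \<mu>_def
      by (subst integrable_distr_eq[OF meas hm]) (rule integrable_measure_pmf_finite[OF finp])
    moreover have "integral\<^sup>L \<mu> h = (\<Sum>s\<in>S. w s * h (g s))"
      unfolding \<mu>_def by (subst integral_distr[OF meas hm]) (rule intp)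
    ultimately show ?thesis by blast
  qed
  have Km: "UNIV - K \<in> sets borel" using assms(1) by (intro borel_open) (auto simp: open_Diff)
  have em: "emeasure \<mu> (UNIV - K) = 0"
  proof -
    have "emeasure \<mu> (UNIV - K) = emeasure (measure_pmf p) (g -` (UNIV - K) \<inter> space (measure_pmf p))"
      unfolding \<mu>_def by (rule emeasure_distr[OF meas Km])
    also have "\<dots> = emeasure (measure_pmf p) ((g -` (UNIV - K) \<inter> space (measure_pmf p)) \<inter> set_pmf p)"
      by (rule emeasure_Int_set_pmf[symmetric])
    also have "(g -` (UNIV - K) \<inter> space (measure_pmf p)) \<inter> set_pmf p = {}"
      using sp S(2) g by auto
    finally show ?thesis by simp
  qed
  define y where "y \<alpha> = (if \<alpha> \<in> mono_set d then integral\<^sup>L \<mu> (monom \<alpha>) else 0)" for \<alpha>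
  have ymon: "\<forall>\<alpha>\<in>mono_set d. integrable \<mu> (monom \<alpha>) \<and> y \<alpha> = integral\<^sup>L \<mu> (monom \<alpha>)"
    using int[OF cont_monom] by (simp add: y_def)
  have ym: "y \<in> moment_cone d K"
    unfolding moment_cone_def using sets em ymon by (auto simp: y_def)
  have z: "(\<lambda>_. 0) \<in> (mono_set d :: ('n \<Rightarrow> nat) set)" by (simp add: mono_set_def mdeg_def)
  have m0: "monom (\<lambda>_. 0) = (\<lambda>_::real^'n. 1::real)" by (simp add: monom_def fun_eq_iff)
  have y0: "y (\<lambda>_. 0) = 1"
    using ymon z int[OF cont_monom, of "\<lambda>_. 0"] S(4) by (simp add: m0)
  have "mpair d (f i) y \<le> u$i" for i
  proof -
    have "mpair d (f i) y = integral\<^sup>L \<mu> (peval (f i))"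
      using mpair_integral[OF assms(2)[rule_format] assms(3)[rule_format] ymon] by blast
    also have "\<dots> = (\<Sum>s\<in>S. w s * peval (f i) (g s))" using int[OF cont_peval] by blast
    also have "\<dots> \<le> (\<Sum>s\<in>S. w s * s$i)"
      using S(2,3) g by (intro sum_mono mult_left_mono) auto
    also have "\<dots> = u$i" using S(5) vec_sum_nth[of w S i] by simp
    finally show ?thesis .
  qed
  thus ?thesis using ym y0 by blast
qed


theorem theorem3p2:
  fixes f :: "'m::finite \<Rightarrow> ('n::finite \<Rightarrow> nat) \<Rightarrow> real"
    and c :: "'k \<Rightarrow> ('n \<Rightarrow> nat) \<Rightarrow> real"
    and E I :: "'k set"
    and K :: "(real^'n) set" and U V :: "(real^'m) set" and d :: nat
  assumes "finite E" "finite I" "E \<inter> I = {}"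
    and "\<forall>i. is_poly (f i)" "\<forall>i\<in>E \<union> I. is_poly (c i)"
    and K_def: "K = {x. (\<forall>i\<in>E. peval (c i) x = 0) \<and> (\<forall>j\<in>I. peval (c j) x \<ge> 0)}"
    and "interior K \<noteq> {}"
    and d_def: "d = Max (range (\<lambda>i. pdeg (f i)))"
    and U_def: "U = {u. \<exists>x\<in>K. \<forall>i. u $ i \<ge> peval (f i) x}"
    and V_def: "V = {v. \<exists>y\<in>moment_cone d K. y (\<lambda>_. 0) = 1 \<and> (\<forall>i. v $ i > mpair d (f i) y)}"
  shows "interior (convex hull U) = V
    \<and> (convex U \<longrightarrow> (\<forall>v\<in>(\<lambda>x. \<chi> i. peval (f i) x) ` K.
          weakly_pareto_value K (\<lambda>i. peval (f i)) v \<longleftrightarrow> v \<in> frontier (closure V)))"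
proof -
  have Keq: "K = (\<Inter>i\<in>E. {x. peval (c i) x = 0}) \<inter> (\<Inter>j\<in>I. {x. peval (c j) x \<ge> 0})"
    unfolding K_def by auto
  have clK: "closed K" unfolding Keq
    by (intro closed_Int closed_INT ballI closed_Collect_eq closed_Collect_le
        continuous_on_const cont_peval)
  obtain x0 where x0: "x0 \<in> K" using assms(7) interior_subset by blast
  have pd: "\<forall>i. pdeg (f i) \<le> d" unfolding d_def by (auto intro: Max_ge)
  have up: "b \<in> U" if ab: "a \<in> U" "\<forall>i. a$i \<le> b$i" for a b
  proof -
    obtain x where x: "x \<in> K" "\<forall>i. a $ i \<ge> peval (f i) x" using ab(1) unfolding U_def by blast
    have "\<forall>i. b $ i \<ge> peval (f i) x" using x(2) ab(2) order_trans by blast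
    thus ?thesis unfolding U_def using x(1) by blast
  qed
  have FU: "(\<chi> i. peval (f i) x) \<in> U" if "x \<in> K" for x
    unfolding U_def using that by auto
  have Ulow: "\<forall>s\<in>U. \<exists>x\<in>K. \<forall>i. peval (f i) x \<le> s$i" unfolding U_def by auto
  have upC: "\<And>a b. a \<in> convex hull U \<Longrightarrow> (\<forall>i. a$i \<le> b$i) \<Longrightarrow> b \<in> convex hull U"
    by (rule hull_upclosed[OF up])
  have part1: "interior (convex hull U) = V"
  proof
    show "interior (convex hull U) \<subseteq> V"
    proof
      fix v assume "v \<in> interior (convex hull U)"
      then obtain u where u: "u \<in> convex hull U" "\<forall>i. u$i < v$i" using interior_below by blast
      obtain y where y: "y \<in> moment_cone d K" "y (\<lambda>_. 0) = 1" "\<forall>i. mpair d (f i) y \<le> u$i"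
        using conv_to_moment[OF clK assms(4) pd Ulow u(1)] by blast
      have "\<forall>i. v $ i > mpair d (f i) y" using y(3) u(2) by (meson order_le_less_trans)
      thus "v \<in> V" unfolding V_def using y(1,2) by blast
    qed
  next
    show "V \<subseteq> interior (convex hull U)"
    proof
      fix v assume "v \<in> V"
      then obtain y where y: "y \<in> moment_cone d K" "y (\<lambda>_. 0) = 1" "\<forall>i. v $ i > mpair d (f i) y"
        unfolding V_def by blast
      obtain \<mu> where \<mu>: "prob_space \<mu>" "sets \<mu> = sets borel" "AE x in \<mu>. x \<in> K"
        "\<forall>\<alpha>\<in>mono_set d. integrable \<mu> (monom \<alpha>) \<and> y \<alpha> = integral\<^sup>L \<mu> (monom \<alpha>)"
        using moment_props[OF y(1) y(2) clK] by blast
      have mi: "integrable \<mu> (peval (f i)) \<and> mpair d (f i) y = integral\<^sup>L \<mu> (peval (f i))" for i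
        using mpair_integral[OF assms(4)[rule_format] pd[rule_format] \<mu>(4)] by blast
      define w where "w = (\<chi> i. integral\<^sup>L \<mu> (peval (f i)))"
      have wc: "w \<in> closure (convex hull U)" unfolding w_def
        by (rule mean_in_closure[OF \<mu>(1) \<mu>(3)]) (use mi FU in auto)
      have lt: "w$i < v$i" for i using y(3)[rule_format, of i] mi[of i] by (simp add: w_def)
      define \<delta> where "\<delta> = Min (range (\<lambda>i. v$i - w$i))"
      have "\<delta> \<in> range (\<lambda>i. v$i - w$i)" unfolding \<delta>_def by (intro Min_in) auto
      hence "\<delta> > 0" using lt by auto
      have dl: "\<delta> \<le> v$i - w$i" for i unfolding \<delta>_def by (intro Min_le) auto
      obtain u where u: "u \<in> convex hull U" "dist u w < \<delta>"
        using wc \<open>\<delta> > 0\<close> unfolding closure_approachable by blast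
      have "\<forall>i. u$i < v$i"
      proof
        fix i
        have "\<bar>(u - w)$i\<bar> \<le> norm (u - w)" by (rule component_le_norm_cart)
        hence "\<bar>u$i - w$i\<bar> < \<delta>" using u(2) by (simp add: dist_norm)
        thus "u$i < v$i" using dl[of i] by linarith
      qed
      thus "v \<in> interior (convex hull U)" using upclosed_interior[of "convex hull U" u v] upC u(1) by blast
    qed
  qed
  moreover have "convex U \<longrightarrow> (\<forall>v\<in>(\<lambda>x. \<chi> i. peval (f i) x) ` K.
          weakly_pareto_value K (\<lambda>i. peval (f i)) v \<longleftrightarrow> v \<in> frontier (closure V))"
  proof (intro impI ballI)
    fix v assume cU: "convex U" and "v \<in> (\<lambda>x. \<chi> i. peval (f i) x) ` K"
    then obtain x where x: "x \<in> K" "v = (\<chi> i. peval (f i) x)" by blast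
    have VU: "V = interior U" using part1 convex_hull_eq[of U] cU by simp
    have lt1: "\<forall>i. (\<chi> i. peval (f i) x0) $ i < (\<chi> i. peval (f i) x0 + 1) $ i"
      by simp
    have "(\<chi> i. peval (f i) x0 + 1) \<in> interior U"
      by (rule upclosed_interior[OF up FU[OF x0] lt1])
    hence iU: "interior U \<noteq> {}" by blast
    have "closure V = closure U" unfolding VU by (rule convex_closure_interior[OF cU iU])
    hence fr: "frontier (closure V) = closure U - interior U"
      by (simp add: frontier_def convex_interior_closure[OF cU])
    have vU: "v \<in> closure U" using FU[OF x(1)] x(2) closure_subset by blast
    show "weakly_pareto_value K (\<lambda>i. peval (f i)) v \<longleftrightarrow> v \<in> frontier (closure V)"
    proof
      assume "weakly_pareto_value K (\<lambda>i. peval (f i)) v"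
      then obtain x' where x': "weakly_pareto K (\<lambda>i. peval (f i)) x'" "v = (\<chi> i. peval (f i) x')"
        unfolding weakly_pareto_value_def by blast
      have "v \<notin> interior U"
      proof
        assume "v \<in> interior U"
        then obtain u where u: "u \<in> U" "\<forall>i. u$i < v$i" using interior_below by blast
        then obtain z where z: "z \<in> K" "\<forall>i. peval (f i) z \<le> u$i" using Ulow by blast
        have "\<forall>i. peval (f i) z < peval (f i) x'"
          using z(2) u(2) x'(2) by (metis order_le_less_trans vec_lambda_beta)
        thus False using x'(1) z(1) unfolding weakly_pareto_def by blast
      qed
      thus "v \<in> frontier (closure V)" using fr vU by blast
    next
      assume "v \<in> frontier (closure V)"
      hence ni: "v \<notin> interior U" using fr by blast
      have "weakly_pareto K (\<lambda>i. peval (f i)) x"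
        unfolding weakly_pareto_def
      proof (intro conjI notI)
        show "x \<in> K" by fact
      next
        assume "\<exists>z\<in>K. \<forall>i. peval (f i) z < peval (f i) x"
        then obtain z where z: "z \<in> K" "\<forall>i. peval (f i) z < peval (f i) x" by blast
        have lt2: "\<forall>i. (\<chi> i. peval (f i) z) $ i < v $ i" using z(2) x(2) by simp
        have "v \<in> interior U"
          by (rule upclosed_interior[OF up FU[OF z(1)] lt2])
        thus False using ni by blast
      qed
      thus "weakly_pareto_value K (\<lambda>i. peval (f i)) v"
        unfolding weakly_pareto_value_def using x(2) by blast
    qed
  qed
  ultimately show ?thesis by blast
qed

end
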